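(* Let $G$ be a graph and $\mathscr{C}$ a group-theoretical graph category. Then for all $k,l\in\mathbb{N}_0$, $$\mathrm{span}\{\hat T^G_{\mathbf{K}}\mid\mathbf{K}\in\mathscr{C}(k,l)\}=\mathrm{span}\{T^G_{\mathbf{K}}\mid\mathbf{K}\in\mathscr{C}(k,l)\}.$$
   Context: Graphs are finite, undirected, without multiple edges, loops allowed, up to isomorphism; $N_k$ is the edgeless graph on $k$ vertices; graph homomorphisms map edges (including loops) to edges. Bilabelled graph: $(K,\mathbf{a},\mathbf{b})$ with $\mathbf{a}\in V(K)^k$, $\mathbf{b}\in V(K)^l$, up to isomorphism; $\mathscr{C}(k,l)$ denotes those in $\mathscr{C}$ with $k$ inputs and $l$ outputs. Operations: tensor product $(K,\mathbf{a},\mathbf{b})\otimes(H,\mathbf{c},\mathbf{d})=(K\sqcup H,\mathbf{a}\mathbf{c},\mathbf{b}\mathbf{d})$; composition (for $|\mathbf{b}|=|\mathbf{c}|$) $(H,\mathbf{c},\mathbf{d})\cdot(K,\mathbf{a},\mathbf{b})=(H\cdot K,\mathbf{a},\mathbf{d})$ with $H\cdot K$ the quotient of $K\sqcup H$ identifying $b_i$ with $c_i$; involution swaps $\mathbf{a},\mathbf{b}$. For a partition $\pi$ of $V(K)$, $K/\pi$ has the blocks as vertices, with an edge between two (possibly equal) blocks iff there is one in $K$ between some of their elements, and $(K,\mathbf{a},\mathbf{b})/\pi=(K/\pi,q_\pi(\mathbf{a}),q_\pi(\mathbf{b}))$. A graph category is a set of bilabelled graphs containing $(N_0,\emptyset,\emptyset)$,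 $(M,(v),(v))$ and $(M,\emptyset,(v,v))$ ($M$ the one-vertex loopless graph with vertex $v$) and closed under tensor products, compositions and involution; it is group-theoretical if it is closed under all quotients $\mathbf{K}\mapsto\mathbf{K}/\pi$. With the vertices of $G$ labelled $1,\dots,n$, $[T^G_{\mathbf{K}}]_{\mathbf{j}\mathbf{i}}=\#\{\phi\colon K\to G\text{ homomorphism}\mid\phi(\mathbf{a})=\mathbf{i},\phi(\mathbf{b})=\mathbf{j}\}$, and $\hat T^G_{\mathbf{K}}$ is defined the same way counting only injective homomorphisms; both are linear maps $(\mathbb{C}^n)^{\otimes k}\to(\mathbb{C}^n)^{\otimes l}$. *)

theory Defs
  imports Complex_Main "HOL-Library.FuncSet"
begin

text \<open>Bilabelled graphs: vertex set, symmetric edge relation (loops allowed),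
input tuple and output tuple.\<close>
record 'v blg =
  verts :: "'v set"
  edges :: "('v \<times> 'v) set"
  inp :: "'v list"
  outp :: "'v list"

definition blg_wf :: "'v blg \<Rightarrow> bool" where
  "blg_wf K \<longleftrightarrow> finite (verts K) \<and> edges K \<subseteq> verts K \<times> verts K \<and> sym (edges K)
     \<and> set (inp K) \<subseteq> verts K \<and> set (outp K) \<subseteq> verts K"

definition blg_iso :: "'a blg \<Rightarrow> 'b blg \<Rightarrow> bool" where
  "blg_iso K H \<longleftrightarrow> (\<exists>f. bij_betw f (verts K) (verts H)
     \<and> (\<forall>x\<in>verts K. \<forall>y\<in>verts K. (x, y) \<in> edges K \<longleftrightarrow> (f x, f y) \<in> edges H)
     \<and> map f (inp K) = inp H \<and> map f (outp K) = outp H)"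

definition blg_tensor :: "'a blg \<Rightarrow> 'b blg \<Rightarrow> ('a + 'b) blg" where
  "blg_tensor K H = \<lparr> verts = Inl ` verts K \<union> Inr ` verts H,
     edges = map_prod Inl Inl ` edges K \<union> map_prod Inr Inr ` edges H,
     inp = map Inl (inp K) @ map Inr (inp H),
     outp = map Inl (outp K) @ map Inr (outp H) \<rparr>"

definition blg_quot :: "'v blg \<Rightarrow> ('v \<times> 'v) set \<Rightarrow> 'v set blg" where
  "blg_quot K R = \<lparr> verts = verts K // R,
     edges = {(R `` {x}, R `` {y}) | x y. (x, y) \<in> edges K},
     inp = map (\<lambda>x. R `` {x}) (inp K),
     outp = map (\<lambda>x. R `` {x}) (outp K) \<rparr>"

text \<open>Composition \<open>H \<cdot> K\<close>: disjoint union, identify the i-th output of K with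
the i-th input of H; inputs of K, outputs of H.\<close>
definition blg_comp :: "'b blg \<Rightarrow> 'a blg \<Rightarrow> ('a + 'b) set blg" where
  "blg_comp H K =
     (let U = \<lparr> verts = Inl ` verts K \<union> Inr ` verts H,
                edges = map_prod Inl Inl ` edges K \<union> map_prod Inr Inr ` edges H,
                inp = map Inl (inp K), outp = map Inr (outp H) \<rparr>;
          S = {(Inl (outp K ! i), Inr (inp H ! i)) | i. i < length (outp K)};
          R = (Id_on (verts U) \<union> S \<union> S\<inverse>)\<^sup>+
      in blg_quot U R)"

definition blg_inv :: "'v blg \<Rightarrow> 'v blg" where
  "blg_inv K = \<lparr> verts = verts K, edges = edges K, inp = outp K, outp = inp K \<rparr>"

definition N0_blg :: "nat blg" where
  "N0_blg = \<lparr> verts = {}, edges = {}, inp = [], outp = [] \<rparr>"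

definition M_id_blg :: "nat blg" where
  "M_id_blg = \<lparr> verts = {0}, edges = {}, inp = [0], outp = [0] \<rparr>"

definition M_cup_blg :: "nat blg" where
  "M_cup_blg = \<lparr> verts = {0}, edges = {}, inp = [], outp = [0, 0] \<rparr>"

text \<open>A graph category, as a set of bilabelled graphs considered up to isomorphism.\<close>
definition graph_category :: "nat blg set \<Rightarrow> bool" where
  "graph_category C \<longleftrightarrow>
     (\<forall>K\<in>C. blg_wf K)
     \<and> (\<exists>L\<in>C. blg_iso N0_blg L) \<and> (\<exists>L\<in>C. blg_iso M_id_blg L) \<and> (\<exists>L\<in>C. blg_iso M_cup_blg L)
     \<and> (\<forall>K\<in>C. \<forall>H\<in>C. \<exists>L\<in>C. blg_iso (blg_tensor K H) L)
     \<and> (\<forall>K\<in>C. \<forall>H\<in>C. length (outp K) = length (inp H) \<longrightarrow> (\<exists>L\<in>C. blg_iso (blg_comp H K) L))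
     \<and> (\<forall>K\<in>C. \<exists>L\<in>C. blg_iso (blg_inv K) L)"

definition group_theoretical :: "nat blg set \<Rightarrow> bool" where
  "group_theoretical C \<longleftrightarrow> graph_category C \<and>
     (\<forall>K\<in>C. \<forall>R. equiv (verts K) R \<longrightarrow> (\<exists>L\<in>C. blg_iso (blg_quot K R) L))"

text \<open>A graph G on vertices 0..n-1 given by a symmetric edge relation (loops allowed).\<close>
definition homs :: "nat \<Rightarrow> (nat \<times> nat) set \<Rightarrow> 'v blg \<Rightarrow> ('v \<Rightarrow> nat) set" where
  "homs n EG K = {\<phi> \<in> verts K \<rightarrow>\<^sub>E {..<n}. \<forall>(x, y)\<in>edges K. (\<phi> x, \<phi> y) \<in> EG}"

text \<open>Matrix entries [T]_{j i}: j indexes outputs, i indexes inputs.\<close>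
definition hom_mat :: "nat \<Rightarrow> (nat \<times> nat) set \<Rightarrow> 'v blg \<Rightarrow> nat list \<Rightarrow> nat list \<Rightarrow> complex" where
  "hom_mat n EG K j i =
     of_nat (card {\<phi> \<in> homs n EG K. map \<phi> (inp K) = i \<and> map \<phi> (outp K) = j})"

definition inj_hom_mat :: "nat \<Rightarrow> (nat \<times> nat) set \<Rightarrow> 'v blg \<Rightarrow> nat list \<Rightarrow> nat list \<Rightarrow> complex" where
  "inj_hom_mat n EG K j i =
     of_nat (card {\<phi> \<in> homs n EG K. inj_on \<phi> (verts K) \<and> map \<phi> (inp K) = i \<and> map \<phi> (outp K) = j})"

definition cspan :: "(nat list \<Rightarrow> nat list \<Rightarrow> complex) set \<Rightarrow> (nat list \<Rightarrow> nat list \<Rightarrow> complex) set" where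
  "cspan S = {M. \<exists>F c. finite F \<and> F \<subseteq> S \<and> M = (\<lambda>j i. \<Sum>g\<in>F. c g * g j i)}"

end

theory Submission
  imports Defs "HOL-Library.Function_Algebras"
begin

definition hset :: "nat \<Rightarrow> (nat \<times> nat) set \<Rightarrow> 'v blg \<Rightarrow> bool \<Rightarrow> nat list \<Rightarrow> nat list \<Rightarrow> ('v \<Rightarrow> nat) set" where
  "hset n EG K b j i = {\<phi> \<in> homs n EG K. (b \<longrightarrow> inj_on \<phi> (verts K)) \<and> map \<phi> (inp K) = i \<and> map \<phi> (outp K) = j}"

lemma hom_mat_hset: "hom_mat n EG K j i = of_nat (card (hset n EG K False j i))"
  unfolding hom_mat_def hset_def by simp

lemma inj_hom_mat_hset: "inj_hom_mat n EG K j i = of_nat (card (hset n EG K True j i))"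
  unfolding inj_hom_mat_def hset_def by simp

definition good :: "'v blg \<Rightarrow> bool" where
  "good K \<longleftrightarrow> edges K \<subseteq> verts K \<times> verts K \<and> set (inp K) \<subseteq> verts K \<and> set (outp K) \<subseteq> verts K"

lemma wf_good: "blg_wf K \<Longrightarrow> good K"
  unfolding blg_wf_def good_def by auto

lemma iso_card:
  assumes gK: "good K" and gL: "good L" and iso: "blg_iso K L"
  shows "card (hset n EG K b j i) = card (hset n EG L b j i)"
proof -
  obtain f where bij: "bij_betw f (verts K) (verts L)"
    and ed: "\<And>x y. x\<in>verts K \<Longrightarrow> y\<in>verts K \<Longrightarrow> (x, y) \<in> edges K \<longleftrightarrow> (f x, f y) \<in> edges L"
    and mi: "map f (inp K) = inp L" and mo: "map f (outp K) = outp L"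
    using iso unfolding blg_iso_def by blast
  have injf: "inj_on f (verts K)" and imf: "f ` verts K = verts L"
    using bij by (auto simp: bij_betw_def)
  define h where "h = (\<lambda>\<psi>::'b \<Rightarrow> nat. restrict (\<psi> \<circ> f) (verts K))"
  have "inj_on h (hset n EG L b j i)"
  proof (rule inj_onI)
    fix \<psi>1 \<psi>2 assume a1: "\<psi>1 \<in> hset n EG L b j i" and a2: "\<psi>2 \<in> hset n EG L b j i" and e: "h \<psi>1 = h \<psi>2"
    have p1: "\<psi>1 \<in> verts L \<rightarrow>\<^sub>E {..<n}" and p2: "\<psi>2 \<in> verts L \<rightarrow>\<^sub>E {..<n}"
      using a1 a2 by (auto simp: hset_def homs_def)
    have "\<forall>y\<in>verts L. \<psi>1 y = \<psi>2 y"
    proof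
      fix y assume "y \<in> verts L"
      then obtain x where "x \<in> verts K" "y = f x" using imf by blast
      then show "\<psi>1 y = \<psi>2 y" using fun_cong[OF e, of x] by (simp add: h_def)
    qed
    then show "\<psi>1 = \<psi>2" using p1 p2 by (metis PiE_ext)
  qed
  moreover have "h ` hset n EG L b j i = hset n EG K b j i"
  proof
    show "h ` hset n EG L b j i \<subseteq> hset n EG K b j i"
    proof
      fix \<phi> assume "\<phi> \<in> h ` hset n EG L b j i"
      then obtain \<psi> where \<psi>: "\<psi> \<in> hset n EG L b j i" and ph: "\<phi> = h \<psi>" by blast
      have p: "\<psi> \<in> verts L \<rightarrow>\<^sub>E {..<n}" and e: "\<forall>(x, y)\<in>edges L. (\<psi> x, \<psi> y) \<in> EG"
        and bi: "b \<longrightarrow> inj_on \<psi> (verts L)" and li: "map \<psi> (inp L) = i" and lo: "map \<psi> (outp L) = j"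
        using \<psi> by (auto simp: hset_def homs_def)
      have "\<phi> \<in> verts K \<rightarrow>\<^sub>E {..<n}" unfolding ph h_def using p imf by (force simp: PiE_iff)
      moreover have "\<forall>(x, y)\<in>edges K. (\<phi> x, \<phi> y) \<in> EG"
      proof (clarify)
        fix x y assume xy: "(x, y) \<in> edges K"
        then have xK: "x \<in> verts K" "y \<in> verts K" using gK by (auto simp: good_def)
        then have "(f x, f y) \<in> edges L" using ed xy by blast
        then show "(\<phi> x, \<phi> y) \<in> EG" using e xK by (auto simp: ph h_def)
      qed
      moreover have "b \<longrightarrow> inj_on \<phi> (verts K)"
      proof
        assume b
        then have "inj_on \<psi> (verts L)" using bi by blast
        then have "inj_on (\<psi> \<circ> f) (verts K)" using injf imf by (simp add: comp_inj_on)
        then show "inj_on \<phi> (verts K)" by (simp add: ph h_def inj_on_def)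
      qed
      moreover have "map \<phi> (inp K) = i"
      proof -
        have "map \<phi> (inp K) = map \<psi> (map f (inp K))" using gK by (auto simp: ph h_def good_def)
        then show ?thesis using mi li by simp
      qed
      moreover have "map \<phi> (outp K) = j"
      proof -
        have "map \<phi> (outp K) = map \<psi> (map f (outp K))" using gK by (auto simp: ph h_def good_def)
        then show ?thesis using mo lo by simp
      qed
      ultimately show "\<phi> \<in> hset n EG K b j i" by (simp add: hset_def homs_def)
    qed
  next
    show "hset n EG K b j i \<subseteq> h ` hset n EG L b j i"
    proof
      fix \<phi> assume \<phi>: "\<phi> \<in> hset n EG K b j i"
      have p: "\<phi> \<in> verts K \<rightarrow>\<^sub>E {..<n}" and e: "\<forall>(x, y)\<in>edges K. (\<phi> x, \<phi> y) \<in> EG"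
        and bi: "b \<longrightarrow> inj_on \<phi> (verts K)" and li: "map \<phi> (inp K) = i" and lo: "map \<phi> (outp K) = j"
        using \<phi> by (auto simp: hset_def homs_def)
      define g where "g = inv_into (verts K) f"
      have gf: "\<And>x. x \<in> verts K \<Longrightarrow> g (f x) = x" using injf by (simp add: g_def)
      have fg: "\<And>y. y \<in> verts L \<Longrightarrow> f (g y) = y \<and> g y \<in> verts K"
        using imf by (auto simp: g_def f_inv_into_f inv_into_into)
      define \<psi> where "\<psi> = restrict (\<phi> \<circ> g) (verts L)"
      have "h \<psi> = \<phi>"
      proof (rule PiE_ext[OF _ p])
        show "h \<psi> \<in> verts K \<rightarrow>\<^sub>E {..<n}" unfolding h_def \<psi>_def using p imf gf by (force simp: PiE_iff)
        show "\<And>x. x \<in> verts K \<Longrightarrow> h \<psi> x = \<phi> x" using imf gf by (auto simp: h_def \<psi>_def)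
      qed
      moreover have "\<psi> \<in> hset n EG L b j i"
      proof -
        have "\<psi> \<in> verts L \<rightarrow>\<^sub>E {..<n}" using p fg by (auto simp: \<psi>_def)
        moreover have "\<forall>(x, y)\<in>edges L. (\<psi> x, \<psi> y) \<in> EG"
        proof (clarify)
          fix x y assume xy: "(x, y) \<in> edges L"
          then have xL: "x \<in> verts L" "y \<in> verts L" using gL by (auto simp: good_def)
          then have "(f (g x), f (g y)) \<in> edges L" using xy fg by simp
          then have "(g x, g y) \<in> edges K" using ed fg xL by blast
          then show "(\<psi> x, \<psi> y) \<in> EG" using e xL by (auto simp: \<psi>_def)
        qed
        moreover have "b \<longrightarrow> inj_on \<psi> (verts L)"
        proof
          assume b
          then have i1: "inj_on \<phi> (verts K)" using bi by blast
          show "inj_on \<psi> (verts L)"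
          proof (rule inj_onI)
            fix x y assume "x \<in> verts L" "y \<in> verts L" "\<psi> x = \<psi> y"
            then show "x = y" using i1 fg unfolding \<psi>_def inj_on_def by (metis comp_apply restrict_apply')
          qed
        qed
        moreover have "map \<psi> (inp L) = i"
        proof -
          have "map \<psi> (inp L) = map \<phi> (inp K)" unfolding mi[symmetric] using gK gf imf by (auto simp: \<psi>_def good_def subset_iff)
          then show ?thesis using li by simp
        qed
        moreover have "map \<psi> (outp L) = j"
        proof -
          have "map \<psi> (outp L) = map \<phi> (outp K)" unfolding mo[symmetric] using gK gf imf by (auto simp: \<psi>_def good_def subset_iff)
          then show ?thesis using lo by simp
        qed
        ultimately show ?thesis by (simp add: hset_def homs_def)
      qed
      ultimately show "\<phi> \<in> h ` hset n EG L b j i" by blast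
    qed
  qed
  ultimately show ?thesis by (metis card_image)
qed


lemma quot_wf:
  assumes wf: "blg_wf K" and eq: "equiv (verts K) R"
  shows "blg_wf (blg_quot K R)"
proof -
  have fin: "finite (verts K)" and ed: "edges K \<subseteq> verts K \<times> verts K" and sy: "sym (edges K)"
    and io: "set (inp K) \<subseteq> verts K" "set (outp K) \<subseteq> verts K"
    using wf by (auto simp: blg_wf_def)
  have Rsub: "R \<subseteq> verts K \<times> verts K" using eq by (simp add: equiv_type)
  show ?thesis unfolding blg_wf_def blg_quot_def
  proof (simp, intro conjI)
    show "finite (verts K // R)" using fin Rsub by (rule finite_quotient)
    show "{(R `` {x}, R `` {y}) |x y. (x, y) \<in> edges K} \<subseteq> verts K // R \<times> verts K // R"
      using ed by (auto intro: quotientI)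
    show "sym {(R `` {x}, R `` {y}) |x y. (x, y) \<in> edges K}"
      using sy by (auto simp: sym_def)
    show "(\<lambda>x. R `` {x}) ` set (inp K) \<subseteq> verts K // R" using io by (auto intro: quotientI)
    show "(\<lambda>x. R `` {x}) ` set (outp K) \<subseteq> verts K // R" using io by (auto intro: quotientI)
  qed
qed

definition kerv :: "'v set \<Rightarrow> ('v \<Rightarrow> nat) \<Rightarrow> ('v \<times> 'v) set" where
  "kerv V \<phi> = {(x, y). x \<in> V \<and> y \<in> V \<and> \<phi> x = \<phi> y}"

lemma kerv_equiv: "equiv V (kerv V \<phi>)"
  by (rule equivI) (auto simp: kerv_def refl_on_def sym_def trans_def)

lemma inj_fiber: "hset n EG K True j i = {\<phi> \<in> hset n EG K False j i. kerv (verts K) \<phi> = Id_on (verts K)}"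
  unfolding hset_def kerv_def inj_on_def by auto

lemma fiber_card:
  assumes wf: "blg_wf K" and eq: "equiv (verts K) R"
  shows "card {\<phi> \<in> hset n EG K False j i. kerv (verts K) \<phi> = R} = card (hset n EG (blg_quot K R) True j i)"
proof -
  let ?V = "verts K"
  let ?Q = "blg_quot K R"
  have ed: "edges K \<subseteq> ?V \<times> ?V" and io: "set (inp K) \<subseteq> ?V" "set (outp K) \<subseteq> ?V"
    using wf by (auto simp: blg_wf_def)
  have vQ: "verts ?Q = ?V // R" and eQ: "edges ?Q = {(R `` {x}, R `` {y}) |x y. (x, y) \<in> edges K}"
    and iQ: "inp ?Q = map (\<lambda>x. R `` {x}) (inp K)" and oQ: "outp ?Q = map (\<lambda>x. R `` {x}) (outp K)"
    by (simp_all add: blg_quot_def)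
  define g where "g = (\<lambda>\<psi>::'a set \<Rightarrow> nat. restrict (\<lambda>x. \<psi> (R `` {x})) ?V)"
  have "inj_on g (hset n EG ?Q True j i)"
  proof (rule inj_onI)
    fix \<psi>1 \<psi>2 assume a1: "\<psi>1 \<in> hset n EG ?Q True j i" and a2: "\<psi>2 \<in> hset n EG ?Q True j i" and e: "g \<psi>1 = g \<psi>2"
    have p1: "\<psi>1 \<in> ?V // R \<rightarrow>\<^sub>E {..<n}" and p2: "\<psi>2 \<in> ?V // R \<rightarrow>\<^sub>E {..<n}"
      using a1 a2 by (auto simp: hset_def homs_def vQ)
    have "\<forall>c\<in>?V // R. \<psi>1 c = \<psi>2 c"
    proof
      fix c assume "c \<in> ?V // R"
      then obtain x where "x \<in> ?V" "c = R `` {x}" by (blast elim: quotientE)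
      then show "\<psi>1 c = \<psi>2 c" using fun_cong[OF e, of x] by (simp add: g_def)
    qed
    then show "\<psi>1 = \<psi>2" using p1 p2 by (metis PiE_ext)
  qed
  moreover have "g ` hset n EG ?Q True j i = {\<phi> \<in> hset n EG K False j i. kerv ?V \<phi> = R}"
  proof
    show "g ` hset n EG ?Q True j i \<subseteq> {\<phi> \<in> hset n EG K False j i. kerv ?V \<phi> = R}"
    proof
      fix \<phi> assume "\<phi> \<in> g ` hset n EG ?Q True j i"
      then obtain \<psi> where \<psi>: "\<psi> \<in> hset n EG ?Q True j i" and ph: "\<phi> = g \<psi>" by blast
      have p: "\<psi> \<in> ?V // R \<rightarrow>\<^sub>E {..<n}" and e: "\<forall>(x, y)\<in>edges ?Q. (\<psi> x, \<psi> y) \<in> EG"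
        and bi: "inj_on \<psi> (?V // R)" and li: "map \<psi> (inp ?Q) = i" and lo: "map \<psi> (outp ?Q) = j"
        using \<psi> by (auto simp: hset_def homs_def vQ)
      have "\<phi> \<in> ?V \<rightarrow>\<^sub>E {..<n}" unfolding ph g_def using p by (force simp: PiE_iff intro: quotientI)
      moreover have "\<forall>(x, y)\<in>edges K. (\<phi> x, \<phi> y) \<in> EG"
      proof (clarify)
        fix x y assume xy: "(x, y) \<in> edges K"
        then have xK: "x \<in> ?V" "y \<in> ?V" using ed by auto
        have "(R `` {x}, R `` {y}) \<in> edges ?Q" using xy eQ by blast
        then show "(\<phi> x, \<phi> y) \<in> EG" using e xK by (auto simp: ph g_def)
      qed
      moreover have "kerv ?V \<phi> = R"
      proof -
        have "\<And>x y. x \<in> ?V \<Longrightarrow> y \<in> ?V \<Longrightarrow> \<phi> x = \<phi> y \<longleftrightarrow> (x, y) \<in> R"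
        proof -
          fix x y assume xy: "x \<in> ?V" "y \<in> ?V"
          have "\<phi> x = \<phi> y \<longleftrightarrow> \<psi> (R `` {x}) = \<psi> (R `` {y})" using xy by (simp add: ph g_def)
          also have "\<dots> \<longleftrightarrow> R `` {x} = R `` {y}" using bi xy by (auto dest: inj_onD intro: quotientI)
          also have "\<dots> \<longleftrightarrow> (x, y) \<in> R" using eq xy by (rule eq_equiv_class_iff)
          finally show "\<phi> x = \<phi> y \<longleftrightarrow> (x, y) \<in> R" .
        qed
        moreover have "R \<subseteq> ?V \<times> ?V" using eq by (simp add: equiv_type)
        ultimately show ?thesis unfolding kerv_def by auto
      qed
      moreover have "map \<phi> (inp K) = i"
      proof -
        have "map \<phi> (inp K) = map \<psi> (inp ?Q)" using io by (auto simp: ph g_def iQ)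
        then show ?thesis using li by simp
      qed
      moreover have "map \<phi> (outp K) = j"
      proof -
        have "map \<phi> (outp K) = map \<psi> (outp ?Q)" using io by (auto simp: ph g_def oQ)
        then show ?thesis using lo by simp
      qed
      ultimately show "\<phi> \<in> {\<phi> \<in> hset n EG K False j i. kerv ?V \<phi> = R}" by (simp add: hset_def homs_def)
    qed
  next
    show "{\<phi> \<in> hset n EG K False j i. kerv ?V \<phi> = R} \<subseteq> g ` hset n EG ?Q True j i"
    proof
      fix \<phi> assume \<phi>: "\<phi> \<in> {\<phi> \<in> hset n EG K False j i. kerv ?V \<phi> = R}"
      have p: "\<phi> \<in> ?V \<rightarrow>\<^sub>E {..<n}" and e: "\<forall>(x, y)\<in>edges K. (\<phi> x, \<phi> y) \<in> EG"
        and kr: "kerv ?V \<phi> = R" and li: "map \<phi> (inp K) = i" and lo: "map \<phi> (outp K) = j"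
        using \<phi> by (auto simp: hset_def homs_def)
      have cls: "\<And>x y. x \<in> ?V \<Longrightarrow> y \<in> R `` {x} \<longleftrightarrow> y \<in> ?V \<and> \<phi> y = \<phi> x"
        using kr unfolding kerv_def by auto
      have img: "\<And>x. x \<in> ?V \<Longrightarrow> \<phi> ` (R `` {x}) = {\<phi> x}"
      proof -
        fix x assume x: "x \<in> ?V"
        have "x \<in> R `` {x}" using cls x by blast
        then show "\<phi> ` (R `` {x}) = {\<phi> x}" using cls[OF x] by auto
      qed
      define \<psi> where "\<psi> = restrict (\<lambda>c. the_elem (\<phi> ` c)) (?V // R)"
      have \<psi>x: "\<And>x. x \<in> ?V \<Longrightarrow> \<psi> (R `` {x}) = \<phi> x" using img by (simp add: \<psi>_def quotientI)
      have "g \<psi> = \<phi>"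
      proof (rule PiE_ext[OF _ p])
        show "g \<psi> \<in> ?V \<rightarrow>\<^sub>E {..<n}" unfolding g_def using p \<psi>x by (force simp: PiE_iff)
        show "\<And>x. x \<in> ?V \<Longrightarrow> g \<psi> x = \<phi> x" using \<psi>x by (simp add: g_def)
      qed
      moreover have "\<psi> \<in> hset n EG ?Q True j i"
      proof -
        have "\<psi> \<in> ?V // R \<rightarrow>\<^sub>E {..<n}"
        proof
          fix c assume "c \<in> ?V // R"
          then obtain x where "x \<in> ?V" "c = R `` {x}" by (blast elim: quotientE)
          then show "\<psi> c \<in> {..<n}" using p \<psi>x by auto
        next
          fix c assume "c \<notin> ?V // R" then show "\<psi> c = undefined" by (simp add: \<psi>_def)
        qed
        moreover have "\<forall>(c, d)\<in>edges ?Q. (\<psi> c, \<psi> d) \<in> EG"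
        proof (clarify)
          fix c d assume "(c, d) \<in> edges ?Q"
          then obtain x y where "(x, y) \<in> edges K" "c = R `` {x}" "d = R `` {y}" using eQ by blast
          moreover then have "x \<in> ?V" "y \<in> ?V" using ed by auto
          ultimately show "(\<psi> c, \<psi> d) \<in> EG" using e \<psi>x by auto
        qed
        moreover have "inj_on \<psi> (?V // R)"
        proof (rule inj_onI)
          fix c d assume c: "c \<in> ?V // R" and d: "d \<in> ?V // R" and cd: "\<psi> c = \<psi> d"
          obtain x where x: "x \<in> ?V" "c = R `` {x}" using c by (blast elim: quotientE)
          obtain y where y: "y \<in> ?V" "d = R `` {y}" using d by (blast elim: quotientE)
          have "\<phi> x = \<phi> y" using cd x y \<psi>x by simp
          then have "(x, y) \<in> R" using kr x y unfolding kerv_def by auto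
          then show "c = d" using x y eq by (simp add: equiv_class_eq_iff)
        qed
        moreover have "map \<psi> (inp ?Q) = i"
        proof -
          have "map \<psi> (inp ?Q) = map \<phi> (inp K)" using io \<psi>x by (auto simp: iQ)
          then show ?thesis using li by simp
        qed
        moreover have "map \<psi> (outp ?Q) = j"
        proof -
          have "map \<psi> (outp ?Q) = map \<phi> (outp K)" using io \<psi>x by (auto simp: oQ)
          then show ?thesis using lo by simp
        qed
        ultimately show ?thesis by (simp add: hset_def homs_def vQ)
      qed
      ultimately show "\<phi> \<in> g ` hset n EG ?Q True j i" by blast
    qed
  qed
  ultimately show ?thesis by (metis card_image)
qed


type_synonym mat = "nat list \<Rightarrow> nat list \<Rightarrow> complex"

definition mscale :: "complex \<Rightarrow> mat \<Rightarrow> mat" where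
  "mscale c f = (\<lambda>j i. c * f j i)"

interpretation M: module mscale
  by unfold_locales (auto simp: mscale_def fun_eq_iff algebra_simps)

lemma fsum_apply: "(sum (f :: 'a \<Rightarrow> mat) A) j i = (\<Sum>a\<in>A. f a j i)"
  by (induction A rule: infinite_finite_induct) auto

lemma cspan_eq: "cspan S = M.span S"
  unfolding cspan_def M.span_explicit
  by (auto simp: fun_eq_iff fsum_apply mscale_def)

lemma finite_EQ: "finite V \<Longrightarrow> finite {R. equiv V R}"
  by (rule finite_subset[of _ "Pow (V \<times> V)"]) (auto dest: equiv_type)

lemma Id_EQ: "equiv V (Id_on V)"
  by (rule equivI) (auto simp: refl_on_def sym_def trans_def)

lemma decomp:
  assumes wf: "blg_wf K"
  shows "card (hset n EG K False j i) = card (hset n EG K True j i)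
     + (\<Sum>R\<in>{R. equiv (verts K) R} - {Id_on (verts K)}. card (hset n EG (blg_quot K R) True j i))"
proof -
  let ?V = "verts K"
  let ?A = "hset n EG K False j i"
  let ?EQ = "{R. equiv ?V R}"
  have finV: "finite ?V" using wf by (simp add: blg_wf_def)
  have finA: "finite ?A"
    by (rule finite_subset[of _ "?V \<rightarrow>\<^sub>E {..<n}"]) (auto simp: hset_def homs_def finite_PiE finV)
  have finEQ: "finite ?EQ" using finV by (rule finite_EQ)
  have "card ?A = (\<Sum>\<phi>\<in>?A. 1)" by simp
  also have "\<dots> = (\<Sum>R\<in>?EQ. \<Sum>\<phi>\<in>{\<phi>. \<phi> \<in> ?A \<and> kerv ?V \<phi> = R}. 1)"
    by (rule sum.group[symmetric, OF finA finEQ]) (auto simp: kerv_equiv)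
  also have "\<dots> = (\<Sum>R\<in>?EQ. card (hset n EG (blg_quot K R) True j i))"
    by (rule sum.cong) (auto simp: fiber_card[OF wf, symmetric])
  also have "\<dots> = card (hset n EG (blg_quot K (Id_on ?V)) True j i)
     + (\<Sum>R\<in>?EQ - {Id_on ?V}. card (hset n EG (blg_quot K R) True j i))"
    by (rule sum.remove[OF finEQ]) (simp add: Id_EQ)
  also have "card (hset n EG (blg_quot K (Id_on ?V)) True j i) = card (hset n EG K True j i)"
    using fiber_card[OF wf Id_EQ, of n EG j i] inj_fiber[of n EG K j i] by simp
  finally show ?thesis .
qed

lemma decomp_mat:
  assumes wf: "blg_wf K"
  shows "hom_mat n EG K = inj_hom_mat n EG K
     + (\<Sum>R\<in>{R. equiv (verts K) R} - {Id_on (verts K)}. inj_hom_mat n EG (blg_quot K R))"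
  by (simp add: fun_eq_iff fsum_apply hom_mat_hset inj_hom_mat_hset decomp[OF wf])

lemma card_quot_less:
  assumes fin: "finite V" and eq: "equiv V R" and ne: "R \<noteq> Id_on V"
  shows "card (V // R) < card V"
proof -
  have q: "V // R = (\<lambda>x. R `` {x}) ` V" unfolding quotient_def by auto
  have le: "card (V // R) \<le> card V" unfolding q using fin by (rule card_image_le)
  have "card (V // R) \<noteq> card V"
  proof
    assume "card (V // R) = card V"
    then have inj: "inj_on (\<lambda>x. R `` {x}) V" using fin q by (metis eq_card_imp_inj_on)
    have "R \<subseteq> Id_on V"
    proof
      fix p assume p: "p \<in> R"
      obtain x y where xy: "p = (x, y)" by (cases p)
      then have "R `` {x} = R `` {y} \<and> x \<in> V \<and> y \<in> V" using p eq equiv_class_eq_iff by fastforce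
      then have "x = y" using inj by (auto dest: inj_onD)
      then show "p \<in> Id_on V" using xy \<open>R `` {x} = R `` {y} \<and> x \<in> V \<and> y \<in> V\<close> by auto
    qed
    moreover have "Id_on V \<subseteq> R" using eq by (auto simp: equiv_def refl_on_def)
    ultimately show False using ne by blast
  qed
  then show ?thesis using le by simp
qed

lemma quot_rep:
  assumes gt: "group_theoretical C" and K: "K \<in> C" and eq: "equiv (verts K) R"
  shows "\<exists>L\<in>C. inj_hom_mat n EG (blg_quot K R) = inj_hom_mat n EG L
    \<and> length (inp L) = length (inp K) \<and> length (outp L) = length (outp K)
    \<and> card (verts L) = card (verts K // R)"
proof -
  have wfall: "\<forall>K\<in>C. blg_wf K" using gt by (simp add: group_theoretical_def graph_category_def)
  obtain L where L: "L \<in> C" and iso: "blg_iso (blg_quot K R) L"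
    using gt K eq unfolding group_theoretical_def by blast
  have wfK: "blg_wf K" using wfall K by blast
  have wfL: "blg_wf L" using wfall L by blast
  have wfQ: "blg_wf (blg_quot K R)" by (rule quot_wf[OF wfK eq])
  obtain f where bij: "bij_betw f (verts K // R) (verts L)"
    and mi: "map f (inp (blg_quot K R)) = inp L" and mo: "map f (outp (blg_quot K R)) = outp L"
    using iso unfolding blg_iso_def by (auto simp: blg_quot_def)
  have "inj_hom_mat n EG (blg_quot K R) = inj_hom_mat n EG L"
    using iso_card[OF wf_good[OF wfQ] wf_good[OF wfL] iso]
    by (simp add: fun_eq_iff inj_hom_mat_hset)
  moreover have "length (inp L) = length (inp K)" using mi[symmetric] by (simp add: blg_quot_def)
  moreover have "length (outp L) = length (outp K)" using mo[symmetric] by (simp add: blg_quot_def)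
  moreover have "card (verts L) = card (verts K // R)" using bij by (simp add: bij_betw_same_card)
  ultimately show ?thesis using L by blast
qed

theorem proposition4p9:
  fixes n :: nat and EG :: "(nat \<times> nat) set" and C :: "nat blg set" and k l :: nat
  assumes "EG \<subseteq> {..<n} \<times> {..<n}" and "sym EG"
    and "group_theoretical C"
  shows "cspan {inj_hom_mat n EG K | K. K \<in> C \<and> length (inp K) = k \<and> length (outp K) = l}
       = cspan {hom_mat n EG K | K. K \<in> C \<and> length (inp K) = k \<and> length (outp K) = l}"
proof -
  let ?SI = "{inj_hom_mat n EG K | K. K \<in> C \<and> length (inp K) = k \<and> length (outp K) = l}"
  let ?ST = "{hom_mat n EG K | K. K \<in> C \<and> length (inp K) = k \<and> length (outp K) = l}"
  have gt: "group_theoretical C" by fact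
  have wfall: "\<And>K. K \<in> C \<Longrightarrow> blg_wf K" using gt by (simp add: group_theoretical_def graph_category_def)
  have A: "inj_hom_mat n EG K \<in> M.span ?ST"
    if "K \<in> C" "length (inp K) = k" "length (outp K) = l" for K
    using that
  proof (induction "card (verts K)" arbitrary: K rule: less_induct)
    case less
    have wfK: "blg_wf K" using wfall less.prems(1) .
    have finV: "finite (verts K)" using wfK by (simp add: blg_wf_def)
    have eqn: "inj_hom_mat n EG K = hom_mat n EG K
       - (\<Sum>R\<in>{R. equiv (verts K) R} - {Id_on (verts K)}. inj_hom_mat n EG (blg_quot K R))"
      using decomp_mat[OF wfK, of n EG] by simp
    have "hom_mat n EG K \<in> M.span ?ST" using less.prems by (auto intro: M.span_base)
    moreover have "(\<Sum>R\<in>{R. equiv (verts K) R} - {Id_on (verts K)}. inj_hom_mat n EG (blg_quot K R)) \<in> M.span ?ST"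
    proof (rule M.span_sum)
      fix R assume R: "R \<in> {R. equiv (verts K) R} - {Id_on (verts K)}"
      then have eq: "equiv (verts K) R" and ne: "R \<noteq> Id_on (verts K)" by auto
      obtain L where L: "L \<in> C" and e: "inj_hom_mat n EG (blg_quot K R) = inj_hom_mat n EG L"
        and li: "length (inp L) = length (inp K)" and lo: "length (outp L) = length (outp K)"
        and c: "card (verts L) = card (verts K // R)"
        using quot_rep[OF gt less.prems(1) eq] by blast
      have "card (verts L) < card (verts K)" using c card_quot_less[OF finV eq ne] by simp
      then have "inj_hom_mat n EG L \<in> M.span ?ST" using less.hyps L li lo less.prems by simp
      then show "inj_hom_mat n EG (blg_quot K R) \<in> M.span ?ST" using e by simp
    qed
    ultimately show ?case unfolding eqn by (rule M.span_diff)
  qed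
  have B: "hom_mat n EG K \<in> M.span ?SI"
    if K: "K \<in> C" "length (inp K) = k" "length (outp K) = l" for K
  proof -
    have wfK: "blg_wf K" using wfall K(1) .
    have "inj_hom_mat n EG K \<in> M.span ?SI" using K by (auto intro: M.span_base)
    moreover have "(\<Sum>R\<in>{R. equiv (verts K) R} - {Id_on (verts K)}. inj_hom_mat n EG (blg_quot K R)) \<in> M.span ?SI"
    proof (rule M.span_sum)
      fix R assume R: "R \<in> {R. equiv (verts K) R} - {Id_on (verts K)}"
      then have eq: "equiv (verts K) R" by auto
      obtain L where L: "L \<in> C" and e: "inj_hom_mat n EG (blg_quot K R) = inj_hom_mat n EG L"
        and li: "length (inp L) = length (inp K)" and lo: "length (outp L) = length (outp K)"
        using quot_rep[OF gt K(1) eq] by blast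
      have "inj_hom_mat n EG L \<in> ?SI" using L li lo K by auto
      then show "inj_hom_mat n EG (blg_quot K R) \<in> M.span ?SI" using e by (auto intro: M.span_base)
    qed
    ultimately show ?thesis unfolding decomp_mat[OF wfK] by (rule M.span_add)
  qed
  have "M.span ?SI \<subseteq> M.span ?ST"
    by (rule M.span_minimal) (use A in auto)
  moreover have "M.span ?ST \<subseteq> M.span ?SI"
    by (rule M.span_minimal) (use B in auto)
  ultimately show ?thesis unfolding cspan_eq by blast
qed

end
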